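(* Assume (A1) and (A6) together with: (a) $M(1)\ge M(0)$ and $Y(1,1)\ge Y(0,m)$ for $m=0,1$; (b) for each $m\in\{0,1\}$, $A\perp\{Y(1,1),Y(0,m),M(1),M(0)\}\mid X$; (c) for each $m\in\{0,1\}$, $\{M(0),M(1)\}\perp Y(0,m)\mid X$; (d) there is $\epsilon>0$ with $P\{P(A=0,M=m\mid X)\ge\epsilon\}=1$ for $m=0,1$ and $P\{P(A=1,M=1\mid X)\ge\epsilon\}=1$. Then for (almost) every $x$, $$\delta(x) = \Big[1-\frac{\mu_{00}(x)}{\mu_{11}(x)}\Big]\Big[1-\frac{\gamma_0(x)}{\gamma_1(x)}\Big] + \Big[1-\frac{\mu_{01}(x)}{\mu_{11}(x)}\Big]\frac{\gamma_0(x)}{\gamma_1(x)}.$$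
   Context: Observed data $O=(X,A,M,Y)$ with covariates $X\in\mathbb{R}^d$, binary exposure $A$, binary mediator $M$, binary outcome $Y$. For $a,m\in\{0,1\}$, $Y(a,m)$ is the potential outcome under $A=a,M=m$, $M(a)$ the potential mediator, $Y(a):=Y(a,M(a))$, all on a common probability space with $O$. $\mu_{am}(x)=P(Y=1\mid A=a,M=m,X=x)$, $\gamma_a(x)=P(M=1\mid A=a,X=x)$. $\delta(x)=P(Y(0)=0\mid Y(1)=1,M(1)=1,X=x)$. (A1) consistency: $A=a,M=m\Rightarrow Y=Y(a,m)$ and $A=a\Rightarrow M=M(a)$. (A6) $P\{P(Y=1\mid A=1,M=1,X)\ge\epsilon\}=1$ for some $\epsilon>0$. *)

theory Defs
  imports "HOL-Probability.Probability"
begin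

definition sigX :: "'a measure \<Rightarrow> ('a \<Rightarrow> real^'d) \<Rightarrow> 'a measure" where
  "sigX M X = vimage_algebra (space M) X borel"

definition cprob :: "'a measure \<Rightarrow> 'a measure \<Rightarrow> ('a \<Rightarrow> bool) \<Rightarrow> 'a \<Rightarrow> real" where
  "cprob M F E = real_cond_exp M F (indicator {w \<in> space M. E w})"

definition ccprob :: "'a measure \<Rightarrow> 'a measure \<Rightarrow> ('a \<Rightarrow> bool) \<Rightarrow> ('a \<Rightarrow> bool) \<Rightarrow> 'a \<Rightarrow> real" where
  "ccprob M F E C = (\<lambda>w. cprob M F (\<lambda>v. E v \<and> C v) w / cprob M F C w)"

definition cond_indep :: "'a measure \<Rightarrow> 'a measure \<Rightarrow> ('a \<Rightarrow> 'u) \<Rightarrow> ('a \<Rightarrow> 'v) \<Rightarrow> bool" where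
  "cond_indep M F U V \<longleftrightarrow> (\<forall>S T. AE w in M.
      cprob M F (\<lambda>v. U v \<in> S \<and> V v \<in> T) w = cprob M F (\<lambda>v. U v \<in> S) w * cprob M F (\<lambda>v. V v \<in> T) w)"

end

theory Submission imports Defs begin

lemma alg:
  fixes a na m0 nm0 m1 d q y00 y01 N e pAM pAMY pnAM pnAnM pnAnMY pnAMY :: real
  assumes "pAM = a*m1" "pAMY = a*q" "pnAM = na*m0" "pnAnM = na*nm0"
    "pnAnMY = na*(nm0*y00)" "pnAMY = na*(m0*y01)" "m1 = m0 + d" "q = N + (m0*y01 + d*y00)"
    "pAM \<ge> e" "pnAM \<ge> e" "pnAnM \<ge> e" "pAMY/pAM \<ge> e" "e > 0"
  shows "N/q = (1 - (pnAnMY/pnAnM)/(pAMY/pAM)) * (1 - (pnAM/na)/(pAM/a))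
             + (1 - (pnAMY/pnAM)/(pAMY/pAM)) * ((pnAM/na)/(pAM/a))"
proof -
  have a: "a \<noteq> 0" "m1 \<noteq> 0" using assms by auto
  have b: "na \<noteq> 0" "m0 \<noteq> 0" "nm0 \<noteq> 0" using assms by auto
  have "q \<noteq> 0"
  proof
    assume "q = 0"
    then have "pAMY/pAM = 0" using assms(2) by simp
    with assms(12,13) show False by linarith
  qed
  note nz = a b this
  have r: "pnAnMY/pnAnM = y00" "pAMY/pAM = q/m1" "pnAM/na = m0" "pAM/a = m1" "pnAMY/pnAM = y01"
    using nz assms(1-6) by auto
  have "N/q = (1 - y00/(q/m1)) * (1 - m0/m1) + (1 - y01/(q/m1)) * (m0/m1)"
  proof -
    have "(1 - y00/(q/m1)) * (1 - m0/m1) + (1 - y01/(q/m1)) * (m0/m1) = (q - y00*(m1-m0) - y01*m0)/q"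
      using nz by (simp add: field_simps)
    also have "q - y00*(m1-m0) - y01*m0 = N" using assms(7,8) by (simp add: algebra_simps)
    finally show ?thesis by simp
  qed
  then show ?thesis unfolding r .
qed

lemma sfs:
  assumes "prob_space M" "X \<in> borel_measurable M"
  shows "sigma_finite_subalgebra M (sigX M X)"
proof (rule finite_measure_subalgebra_is_sigma_finite)
  interpret prob_space M by fact
  show "finite_measure_subalgebra M (sigX M X)"
  proof unfold_locales
    have "X \<in> space M \<rightarrow> space borel" by simp
    then have "sets (sigX M X) = {X -` A \<inter> space M |A. A \<in> sets borel}"
      unfolding sigX_def by (rule sets_vimage_algebra2)
    then show "subalgebra M (sigX M X)" unfolding subalgebra_def sigX_def
      using measurable_sets[OF assms(2)] by auto
  qed
qed

lemma cprob_cong: "(\<And>w. w \<in> space M \<Longrightarrow> E w = E' w) \<Longrightarrow> cprob M F E = cprob M F E'"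
  unfolding cprob_def by (metis (no_types, lifting) Collect_cong)

lemma cprob_add:
  assumes "sigma_finite_subalgebra M F" "finite_measure M"
    "{w\<in>space M. E1 w} \<in> sets M" "{w\<in>space M. E2 w} \<in> sets M"
    "\<And>w. w \<in> space M \<Longrightarrow> \<not>(E1 w \<and> E2 w)"
  shows "AE w in M. cprob M F (\<lambda>v. E1 v \<or> E2 v) w = cprob M F E1 w + cprob M F E2 w"
proof -
  have eq: "indicator {w\<in>space M. E1 w \<or> E2 w} = (\<lambda>x. indicator {w\<in>space M. E1 w} x + indicator {w\<in>space M. E2 w} x :: real)"
    using assms(5) by (auto simp: indicator_def fun_eq_iff)
  have i: "integrable M (indicator {w\<in>space M. E1 w} :: _ \<Rightarrow> real)" "integrable M (indicator {w\<in>space M. E2 w} :: _ \<Rightarrow> real)"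
    using assms(3,4) finite_measure.emeasure_finite[OF assms(2)]
    by (auto intro!: integrable_real_indicator simp: less_top)
  show ?thesis unfolding cprob_def eq
    by (rule sigma_finite_subalgebra.real_cond_exp_add[OF assms(1) i])
qed

lemma ev: "P \<in> measurable M (count_space UNIV) \<Longrightarrow> {w\<in>space M. P w} \<in> sets M"
proof -
  assume "P \<in> measurable M (count_space UNIV)"
  then have "P -` {True} \<inter> space M \<in> sets M" by (rule measurable_sets) auto
  moreover have "P -` {True} \<inter> space M = {w\<in>space M. P w}" by auto
  ultimately show ?thesis by simp
qed

lemma indep_inst:
  assumes "cond_indep M F U V" "\<And>w. w \<in> space M \<Longrightarrow> E w = (U w \<in> S \<and> V w \<in> T)"
    "\<And>w. w \<in> space M \<Longrightarrow> E1 w = (U w \<in> S)" "\<And>w. w \<in> space M \<Longrightarrow> E2 w = (V w \<in> T)"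
  shows "AE w in M. cprob M F E w = cprob M F E1 w * cprob M F E2 w"
proof -
  have "AE w in M. cprob M F (\<lambda>v. U v \<in> S \<and> V v \<in> T) w = cprob M F (\<lambda>v. U v \<in> S) w * cprob M F (\<lambda>v. V v \<in> T) w"
    using assms(1) unfolding cond_indep_def by blast
  moreover have "cprob M F E = cprob M F (\<lambda>v. U v \<in> S \<and> V v \<in> T)" "cprob M F E1 = cprob M F (\<lambda>v. U v \<in> S)"
    "cprob M F E2 = cprob M F (\<lambda>v. V v \<in> T)"
    using assms(2-4) by (auto intro: cprob_cong)
  ultimately show ?thesis by simp
qed

theorem mainTheorem3:
  fixes M :: "'a measure"
    and X :: "'a \<Rightarrow> real^'d"
    and A Med Y :: "'a \<Rightarrow> bool"
    and Yp :: "bool \<Rightarrow> bool \<Rightarrow> 'a \<Rightarrow> bool"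
    and Mp :: "bool \<Rightarrow> 'a \<Rightarrow> bool"
    and \<epsilon> :: real
  assumes "prob_space M"
    and "X \<in> borel_measurable M"
    and "A \<in> measurable M (count_space UNIV)"
    and "Med \<in> measurable M (count_space UNIV)"
    and "Y \<in> measurable M (count_space UNIV)"
    and "\<And>a m. Yp a m \<in> measurable M (count_space UNIV)"
    and "\<And>a. Mp a \<in> measurable M (count_space UNIV)"
    \<comment> \<open>(A1) consistency\<close>
    and A1: "\<forall>w\<in>space M. Med w = Mp (A w) w \<and> Y w = Yp (A w) (Med w) w"
    and eps: "\<epsilon> > 0"
    \<comment> \<open>(A6)\<close>
    and A6: "AE w in M. ccprob M (sigX M X) Y (\<lambda>v. A v \<and> Med v) w \<ge> \<epsilon>"
    \<comment> \<open>(a) monotonicity\<close>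
    and mono: "\<forall>w\<in>space M. Mp False w \<le> Mp True w \<and> (\<forall>m. Yp False m w \<le> Yp True True w)"
    \<comment> \<open>(b)\<close>
    and ci_b: "\<And>m. cond_indep M (sigX M X) A
                 (\<lambda>w. (Yp True True w, Yp False m w, Mp True w, Mp False w))"
    \<comment> \<open>(c)\<close>
    and ci_c: "\<And>m. cond_indep M (sigX M X) (\<lambda>w. (Mp False w, Mp True w)) (Yp False m)"
    \<comment> \<open>(d) positivity\<close>
    and pos0: "\<And>m. AE w in M. cprob M (sigX M X) (\<lambda>v. \<not> A v \<and> Med v = m) w \<ge> \<epsilon>"
    and pos1: "AE w in M. cprob M (sigX M X) (\<lambda>v. A v \<and> Med v) w \<ge> \<epsilon>"
  shows "AE w in M.
    ccprob M (sigX M X) (\<lambda>v. \<not> Yp False (Mp False v) v)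
                        (\<lambda>v. Yp True (Mp True v) v \<and> Mp True v) w
    = (1 - ccprob M (sigX M X) Y (\<lambda>v. \<not> A v \<and> \<not> Med v) w
           / ccprob M (sigX M X) Y (\<lambda>v. A v \<and> Med v) w)
      * (1 - ccprob M (sigX M X) Med (\<lambda>v. \<not> A v) w / ccprob M (sigX M X) Med A w)
    + (1 - ccprob M (sigX M X) Y (\<lambda>v. \<not> A v \<and> Med v) w
           / ccprob M (sigX M X) Y (\<lambda>v. A v \<and> Med v) w)
      * (ccprob M (sigX M X) Med (\<lambda>v. \<not> A v) w / ccprob M (sigX M X) Med A w)"
proof -
  interpret prob_space M by fact
  have sf: "sigma_finite_subalgebra M (sigX M X)" by (rule sfs) fact+
  have fm: "finite_measure M" by (rule finite_measure_axioms)
  note add = cprob_add[OF sf fm]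
  let ?P = "cprob M (sigX M X)"
  have A1m: "\<And>w. w \<in> space M \<Longrightarrow> Med w = (A w \<and> Mp True w \<or> \<not> A w \<and> Mp False w)"
    using A1 by (metis (full_types))
  have A1y: "\<And>w. w \<in> space M \<Longrightarrow> Y w = (A w \<and> (Med w \<and> Yp True True w \<or> \<not> Med w \<and> Yp True False w)
      \<or> \<not> A w \<and> (Med w \<and> Yp False True w \<or> \<not> Med w \<and> Yp False False w))"
    using A1 by (metis (full_types))
  have i1: "AE w in M. ?P (\<lambda>v. A v \<and> Med v) w = ?P A w * ?P (Mp True) w"
    by (rule indep_inst[OF ci_b[of True], where S="{True}" and T="{(a,b,c,d). c}"]) (auto simp: A1m A1y split: prod.splits)
  have i2: "AE w in M. ?P (\<lambda>v. Y v \<and> (A v \<and> Med v)) w = ?P A w * ?P (\<lambda>v. Yp True True v \<and> Mp True v) w"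
    by (rule indep_inst[OF ci_b[of True], where S="{True}" and T="{(a,b,c,d). a \<and> c}"]) (auto simp: A1m A1y split: prod.splits)
  have i3: "AE w in M. ?P (\<lambda>v. Med v \<and> \<not> A v) w = ?P (\<lambda>v. \<not> A v) w * ?P (Mp False) w"
    by (rule indep_inst[OF ci_b[of True], where S="{False}" and T="{(a,b,c,d). d}"]) (auto simp: A1m A1y split: prod.splits)
  have i4: "AE w in M. ?P (\<lambda>v. \<not> A v \<and> \<not> Med v) w = ?P (\<lambda>v. \<not> A v) w * ?P (\<lambda>v. \<not> Mp False v) w"
    by (rule indep_inst[OF ci_b[of True], where S="{False}" and T="{(a,b,c,d). \<not> d}"]) (auto simp: A1m A1y split: prod.splits)
  have i5: "AE w in M. ?P (\<lambda>v. Y v \<and> (\<not> A v \<and> \<not> Med v)) w = ?P (\<lambda>v. \<not> A v) w * ?P (\<lambda>v. \<not> Mp False v \<and> Yp False False v) w"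
    by (rule indep_inst[OF ci_b[of False], where S="{False}" and T="{(a,b,c,d). \<not> d \<and> b}"]) (auto simp: A1m A1y split: prod.splits)
  have i6: "AE w in M. ?P (\<lambda>v. Y v \<and> (\<not> A v \<and> Med v)) w = ?P (\<lambda>v. \<not> A v) w * ?P (\<lambda>v. Mp False v \<and> Yp False True v) w"
    by (rule indep_inst[OF ci_b[of True], where S="{False}" and T="{(a,b,c,d). d \<and> b}"]) (auto simp: A1m A1y split: prod.splits)
  have c1: "AE w in M. ?P (\<lambda>v. \<not> Mp False v \<and> Yp False False v) w = ?P (\<lambda>v. \<not> Mp False v) w * ?P (Yp False False) w"
    by (rule indep_inst[OF ci_c[of False], where S="{(x,y). \<not> x}" and T="{True}"]) (auto simp: A1m A1y split: prod.splits)
  have c2: "AE w in M. ?P (\<lambda>v. Mp False v \<and> Yp False True v) w = ?P (Mp False) w * ?P (Yp False True) w"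
    by (rule indep_inst[OF ci_c[of True], where S="{(x,y). x}" and T="{True}"]) (auto simp: A1m A1y split: prod.splits)
  have c3: "AE w in M. ?P (\<lambda>v. (\<not> Mp False v \<and> Mp True v) \<and> Yp False False v) w = ?P (\<lambda>v. \<not> Mp False v \<and> Mp True v) w * ?P (Yp False False) w"
    by (rule indep_inst[OF ci_c[of False], where S="{(x,y). \<not> x \<and> y}" and T="{True}"]) (auto simp: A1m A1y split: prod.splits)
  have a1: "AE w in M. ?P (Mp True) w = ?P (Mp False) w + ?P (\<lambda>v. \<not> Mp False v \<and> Mp True v) w"
  proof -
    have "?P (Mp True) = ?P (\<lambda>v. Mp False v \<or> (\<not> Mp False v \<and> Mp True v))"
      by (rule cprob_cong) (use mono in auto)
    moreover have "AE w in M. ?P (\<lambda>v. Mp False v \<or> (\<not> Mp False v \<and> Mp True v)) w = ?P (Mp False) w + ?P (\<lambda>v. \<not> Mp False v \<and> Mp True v) w"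
      by (rule add; (intro sets.sets_Collect_conj sets.sets_Collect_neg sets.sets_Collect_disj ev assms(6,7))?; auto)
    ultimately show ?thesis by simp
  qed
  define W where "W = (\<lambda>v. (Mp False v \<and> Yp False True v) \<or> ((\<not> Mp False v \<and> Mp True v) \<and> Yp False False v))"
  define N where "N = (\<lambda>v. Yp True True v \<and> Mp True v \<and> \<not> W v)"
  have a2: "AE w in M. ?P (\<lambda>v. Yp True True v \<and> Mp True v) w = ?P N w + ?P W w"
  proof -
    have "?P (\<lambda>v. Yp True True v \<and> Mp True v) = ?P (\<lambda>v. N v \<or> W v)"
      by (rule cprob_cong) (use mono in \<open>auto simp: N_def W_def\<close>)
    moreover have "AE w in M. ?P (\<lambda>v. N v \<or> W v) w = ?P N w + ?P W w"
      unfolding N_def W_def by (rule add; (intro sets.sets_Collect_conj sets.sets_Collect_neg sets.sets_Collect_disj ev assms(6,7))?; auto)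
    ultimately show ?thesis by simp
  qed
  have a3: "AE w in M. ?P W w = ?P (\<lambda>v. Mp False v \<and> Yp False True v) w + ?P (\<lambda>v. (\<not> Mp False v \<and> Mp True v) \<and> Yp False False v) w"
    unfolding W_def by (rule add; (intro sets.sets_Collect_conj sets.sets_Collect_neg sets.sets_Collect_disj ev assms(6,7))?; auto)
  have lhs1: "?P (\<lambda>v. \<not> Yp False (Mp False v) v \<and> (Yp True (Mp True v) v \<and> Mp True v)) = ?P N"
  proof (rule cprob_cong)
    fix w assume "w \<in> space M"
    then show "(\<not> Yp False (Mp False w) w \<and> (Yp True (Mp True w) w \<and> Mp True w)) = N w"
      using mono unfolding N_def W_def by (cases "Mp False w"; cases "Mp True w") auto
  qed
  have lhs2: "?P (\<lambda>v. Yp True (Mp True v) v \<and> Mp True v) = ?P (\<lambda>v. Yp True True v \<and> Mp True v)"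
    by (rule cprob_cong) (metis (full_types))
  have e1: "?P (\<lambda>v. \<not> A v \<and> Med v = True) = ?P (\<lambda>v. Med v \<and> \<not> A v)"
    by (rule cprob_cong) auto
  have e2: "?P (\<lambda>v. \<not> A v \<and> Med v = False) = ?P (\<lambda>v. \<not> A v \<and> \<not> Med v)"
    by (rule cprob_cong) auto
  have e3: "?P (\<lambda>v. Med v \<and> A v) = ?P (\<lambda>v. A v \<and> Med v)"
    by (rule cprob_cong) auto
  have e4: "?P (\<lambda>v. \<not> A v \<and> Med v) = ?P (\<lambda>v. Med v \<and> \<not> A v)"
    by (rule cprob_cong) auto
  have p0: "AE w in M. ?P (\<lambda>v. Med v \<and> \<not> A v) w \<ge> \<epsilon>" "AE w in M. ?P (\<lambda>v. \<not> A v \<and> \<not> Med v) w \<ge> \<epsilon>"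
    using pos0[of True] pos0[of False] e1 e2 by auto
  have p1: "AE w in M. ?P (\<lambda>v. A v \<and> Med v) w \<ge> \<epsilon>" using pos1 .
  have p6: "AE w in M. ?P (\<lambda>v. Y v \<and> (A v \<and> Med v)) w / ?P (\<lambda>v. A v \<and> Med v) w \<ge> \<epsilon>"
    using A6 by (simp add: ccprob_def)
  have all: "AE w in M. ?P (\<lambda>v. A v \<and> Med v) w = ?P A w * ?P (Mp True) w
     \<and> ?P (\<lambda>v. Y v \<and> (A v \<and> Med v)) w = ?P A w * ?P (\<lambda>v. Yp True True v \<and> Mp True v) w
     \<and> ?P (\<lambda>v. Med v \<and> \<not> A v) w = ?P (\<lambda>v. \<not> A v) w * ?P (Mp False) w
     \<and> ?P (\<lambda>v. \<not> A v \<and> \<not> Med v) w = ?P (\<lambda>v. \<not> A v) w * ?P (\<lambda>v. \<not> Mp False v) w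
     \<and> ?P (\<lambda>v. Y v \<and> (\<not> A v \<and> \<not> Med v)) w = ?P (\<lambda>v. \<not> A v) w * (?P (\<lambda>v. \<not> Mp False v) w * ?P (Yp False False) w)
     \<and> ?P (\<lambda>v. Y v \<and> (\<not> A v \<and> Med v)) w = ?P (\<lambda>v. \<not> A v) w * (?P (Mp False) w * ?P (Yp False True) w)
     \<and> ?P (Mp True) w = ?P (Mp False) w + ?P (\<lambda>v. \<not> Mp False v \<and> Mp True v) w
     \<and> ?P (\<lambda>v. Yp True True v \<and> Mp True v) w = ?P N w + (?P (Mp False) w * ?P (Yp False True) w
          + ?P (\<lambda>v. \<not> Mp False v \<and> Mp True v) w * ?P (Yp False False) w)
     \<and> ?P (\<lambda>v. A v \<and> Med v) w \<ge> \<epsilon> \<and> ?P (\<lambda>v. Med v \<and> \<not> A v) w \<ge> \<epsilon>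
     \<and> ?P (\<lambda>v. \<not> A v \<and> \<not> Med v) w \<ge> \<epsilon>
     \<and> ?P (\<lambda>v. Y v \<and> (A v \<and> Med v)) w / ?P (\<lambda>v. A v \<and> Med v) w \<ge> \<epsilon>"
    using i1 i2 i3 i4 i5 i6 c1 c2 c3 a1 a2 a3 p0 p1 p6 by eventually_elim auto
  show ?thesis
  proof (rule eventually_mono[OF all], elim conjE)
    fix w assume H: "?P (\<lambda>v. A v \<and> Med v) w = ?P A w * ?P (Mp True) w"
     "?P (\<lambda>v. Y v \<and> (A v \<and> Med v)) w = ?P A w * ?P (\<lambda>v. Yp True True v \<and> Mp True v) w"
     "?P (\<lambda>v. Med v \<and> \<not> A v) w = ?P (\<lambda>v. \<not> A v) w * ?P (Mp False) w"
     "?P (\<lambda>v. \<not> A v \<and> \<not> Med v) w = ?P (\<lambda>v. \<not> A v) w * ?P (\<lambda>v. \<not> Mp False v) w"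
     "?P (\<lambda>v. Y v \<and> (\<not> A v \<and> \<not> Med v)) w = ?P (\<lambda>v. \<not> A v) w * (?P (\<lambda>v. \<not> Mp False v) w * ?P (Yp False False) w)"
     "?P (\<lambda>v. Y v \<and> (\<not> A v \<and> Med v)) w = ?P (\<lambda>v. \<not> A v) w * (?P (Mp False) w * ?P (Yp False True) w)"
     "?P (Mp True) w = ?P (Mp False) w + ?P (\<lambda>v. \<not> Mp False v \<and> Mp True v) w"
     "?P (\<lambda>v. Yp True True v \<and> Mp True v) w = ?P N w + (?P (Mp False) w * ?P (Yp False True) w
          + ?P (\<lambda>v. \<not> Mp False v \<and> Mp True v) w * ?P (Yp False False) w)"
     "?P (\<lambda>v. A v \<and> Med v) w \<ge> \<epsilon>" "?P (\<lambda>v. Med v \<and> \<not> A v) w \<ge> \<epsilon>"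
     "?P (\<lambda>v. \<not> A v \<and> \<not> Med v) w \<ge> \<epsilon>"
     "?P (\<lambda>v. Y v \<and> (A v \<and> Med v)) w / ?P (\<lambda>v. A v \<and> Med v) w \<ge> \<epsilon>"
    show "ccprob M (sigX M X) (\<lambda>v. \<not> Yp False (Mp False v) v) (\<lambda>v. Yp True (Mp True v) v \<and> Mp True v) w =
         (1 - ccprob M (sigX M X) Y (\<lambda>v. \<not> A v \<and> \<not> Med v) w / ccprob M (sigX M X) Y (\<lambda>v. A v \<and> Med v) w) *
         (1 - ccprob M (sigX M X) Med (\<lambda>v. \<not> A v) w / ccprob M (sigX M X) Med A w) +
         (1 - ccprob M (sigX M X) Y (\<lambda>v. \<not> A v \<and> Med v) w / ccprob M (sigX M X) Y (\<lambda>v. A v \<and> Med v) w) *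
         (ccprob M (sigX M X) Med (\<lambda>v. \<not> A v) w / ccprob M (sigX M X) Med A w)"
      unfolding ccprob_def lhs1 lhs2 e3 e4
      by (rule alg[OF H(1) H(2) H(3) H(4) H(5) H(6) H(7) H(8) H(9) H(10) H(11) H(12) eps])
  qed
qed

end
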